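(* Let $\psi:\mathbb{R}\to\mathbb{R}$ be the Haar wavelet, \[ \psi(t)=\begin{cases}1 & 0\le t<1/2,\\ -1 & 1/2\le t<1,\\ 0 & \text{otherwise},\end{cases} \] and let $f:\mathbb{R}\to\mathbb{R}$ be a continuous and bounded function. Let $T>0$. Suppose that \[ Wf(u,2T):=\int_{-\infty}^{+\infty} f(t)\,\frac{1}{\sqrt{2T}}\,\psi\!\left(\frac{t-u}{2T}\right)\mathrm{d}t=0\quad\text{for all } u\in\mathbb{R}. \] Then $f$ is $T$-periodic, i.e. $f(t+T)=f(t)$ for all $t\in\mathbb{R}$.
   Context: For a wavelet $\psi$ and $u\in\mathbb{R}$, $s>0$, the daughter wavelet is $\psi_{u,s}(t)=\frac{1}{\sqrt{s}}\psi\left(\frac{t-u}{s}\right)$, and the continuous wavelet transform of $f$ at time $u$ and scale $s$ is $Wf(u,s)=\int_{-\infty}^{+\infty} f(t)\,\psi_{u,s}^*(t)\,\mathrm{d}t$ (complex conjugate; here $\psi$ is real). Since the Haar wavelet has compact support and $f$ is bounded and continuous, this integral is well defined even though $f$ need not lie in $L^2(\mathbb{R})$. *)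

theory Defs
  imports "HOL-Analysis.Analysis"
begin

definition haar :: "real \<Rightarrow> real" where
  "haar t = (if 0 \<le> t \<and> t < 1/2 then 1 else if 1/2 \<le> t \<and> t < 1 then -1 else 0)"

definition daughter :: "(real \<Rightarrow> real) \<Rightarrow> real \<Rightarrow> real \<Rightarrow> real \<Rightarrow> real" where
  "daughter \<psi> u s t = (1 / sqrt s) * \<psi> ((t - u) / s)"

text \<open>Continuous wavelet transform (real wavelet, so no conjugation needed).\<close>
definition cwt :: "(real \<Rightarrow> real) \<Rightarrow> (real \<Rightarrow> real) \<Rightarrow> real \<Rightarrow> real \<Rightarrow> real" where
  "cwt \<psi> f u s = integral UNIV (\<lambda>t. f t * daughter \<psi> u s t)"

end

theory Submission
  imports Defs
begin

lemma cwt_eq: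
  fixes f :: "real \<Rightarrow> real" and T u :: real
  assumes cf: "continuous_on UNIV f" and T: "T > 0"
  shows "cwt haar f u (2 * T) = (1 / sqrt (2*T)) * (integral {u..u+T} f - integral {u+T..u+2*T} f)"
proof -
  define c where "c = 1 / sqrt (2*T)"
  define h where "h t = (if t \<in> {u..u+T} then f t else 0) - (if t \<in> {u+T..u+2*T} then f t else 0)" for t
  have i1: "(f has_integral integral {u..u+T} f) {u..u+T}"
    by (rule integrable_integral, rule integrable_continuous_interval, rule continuous_on_subset[OF cf]) auto
  have i2: "(f has_integral integral {u+T..u+2*T} f) {u+T..u+2*T}"
    by (rule integrable_integral, rule integrable_continuous_interval, rule continuous_on_subset[OF cf]) auto
  have "(h has_integral (integral {u..u+T} f - integral {u+T..u+2*T} f)) UNIV"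
    unfolding h_def
    by (rule has_integral_diff; subst has_integral_restrict_UNIV; fact)
  then have hi: "((\<lambda>t. c * h t) has_integral c * (integral {u..u+T} f - integral {u+T..u+2*T} f)) UNIV"
    by (rule has_integral_mult_right)
  have pw: "f t * daughter haar u (2 * T) t = c * h t" if "t \<in> UNIV - {u+T, u+2*T}" for t
  proof -
    have e1: "0 \<le> (t-u)/(2*T) \<longleftrightarrow> u \<le> t" using T by (simp add: zero_le_divide_iff)
    have e2: "(t-u)/(2*T) < 1/2 \<longleftrightarrow> t < u + T" using T by (simp add: divide_less_eq; linarith)
    have e3: "(t-u)/(2*T) < 1 \<longleftrightarrow> t < u + 2*T" using T by (simp add: divide_less_eq; linarith)
    have e4: "1/2 \<le> (t-u)/(2*T) \<longleftrightarrow> u + T \<le> t" using T by (simp add: le_divide_eq; linarith)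
    have ne: "t \<noteq> u + T" "t \<noteq> u + 2*T" using that by auto
    have hv: "haar ((t-u)/(2*T)) = (if u \<le> t \<and> t < u + T then 1 else if u + T \<le> t \<and> t < u + 2*T then -1 else 0)"
      unfolding haar_def e1 e2 e3 e4 by simp
    have hh: "h t = (if u \<le> t \<and> t < u + T then f t else if u + T \<le> t \<and> t < u + 2*T then - f t else 0)"
      unfolding h_def using ne T by auto
    show ?thesis unfolding daughter_def hv hh c_def by auto
  qed
  have "((\<lambda>t. f t * daughter haar u (2 * T) t) has_integral c * (integral {u..u+T} f - integral {u+T..u+2*T} f)) UNIV"
    using has_integral_spike[OF negligible_finite[of "{u+T, u+2*T}"] pw hi] by simp
  then show ?thesis unfolding cwt_def c_def by (rule integral_unique)
qed

theorem proposition2p1: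
  fixes f :: "real \<Rightarrow> real" and T :: real
  assumes "continuous_on UNIV f"
    and "bounded (range f)"
    and "T > 0"
    and "\<forall>u. cwt haar f u (2 * T) = 0"
  shows "\<forall>t. f (t + T) = f t"
proof -
  note cf = assms(1) and T = assms(3)
  have eqI: "integral {u..u+T} f = integral {u+T..u+2*T} f" for u
    using assms(4) cwt_eq[OF cf T, of u] T by auto
  have key: "f (x + 2*T) - 2 * f (x + T) + f x = 0" for x
  proof -
    define a where "a = x - 1"
    define b where "b = x + 2*T + 1"
    define I where "I y = integral {a..y} f" for y
    have comb: "integral {p..q} f = I q - I p" if "a \<le> p" "p \<le> q" for p q
    proof -
      have "integral {a..p} f + integral {p..q} f = integral {a..q} f"
        by (rule Henstock_Kurzweil_Integration.integral_combine, use that in auto)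
          (rule integrable_continuous_interval, rule continuous_on_subset[OF cf], auto)
      then show ?thesis unfolding I_def by simp
    qed
    have dI: "(I has_field_derivative f y) (at y)" if "a < y" "y < b" for y
    proof -
      have "(I has_field_derivative f y) (at y within {a..b})"
        unfolding I_def
        by (rule integral_has_real_derivative, rule continuous_on_subset[OF cf]) (use that in auto)
      moreover have "at y within {a..b} = at y"
        by (rule at_within_interior) (use that in auto)
      ultimately show ?thesis by simp
    qed
    have d0: "((\<lambda>u. I (u + 2*T)) has_field_derivative f (x + 2*T)) (at x)"
      using dI[of "x + 2*T"] T unfolding a_def b_def by (simp add: DERIV_shift)
    have d1: "((\<lambda>u. I (u + T)) has_field_derivative f (x + T)) (at x)"
      using dI[of "x + T"] T unfolding a_def b_def by (simp add: DERIV_shift)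
    have d2: "(I has_field_derivative f x) (at x)"
      using dI[of x] T unfolding a_def b_def by simp
    have D: "((\<lambda>u. I (u + 2*T) - 2 * I (u + T) + I u) has_field_derivative
        f (x + 2*T) - 2 * f (x + T) + f x) (at x)"
      using DERIV_add[OF DERIV_diff[OF d0 DERIV_cmult[OF d1, of 2]] d2] by simp
    have Z: "((\<lambda>u. 0) has_field_derivative f (x + 2*T) - 2 * f (x + T) + f x) (at x)"
    proof (rule has_field_derivative_transform_within_open[OF D, of "{a<..}"])
      show "open {a<..}" by simp
      show "x \<in> {a<..}" unfolding a_def by simp
      fix u assume "u \<in> {a<..}"
      then have "a \<le> u" by simp
      have "integral {u..u+T} f = integral {u+T..u+2*T} f" by (rule eqI)
      moreover have "integral {u..u+T} f = I (u+T) - I u" using \<open>a \<le> u\<close> T by (intro comb) auto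
      moreover have "integral {u+T..u+2*T} f = I (u+2*T) - I (u+T)" using \<open>a \<le> u\<close> T by (intro comb) auto
      ultimately show "I (u + 2*T) - 2 * I (u + T) + I u = 0" by simp
    qed
    show ?thesis using DERIV_unique[OF Z DERIV_const] by simp
  qed
  define g where "g u = f (u + T) - f u" for u
  have gT: "g (u + T) = g u" for u
  proof -
    have "u + T + T = u + 2*T" by simp
    then have "f (u + T + T) = f (u + 2*T)" by (rule arg_cong)
    then show ?thesis using key[of u] unfolding g_def by linarith
  qed
  have gn: "g (u + real n * T) = g u" for u n
  proof (induction n)
    case 0 then show ?case by simp
  next
    case (Suc n)
    have "u + real (Suc n) * T = (u + real n * T) + T" by (simp add: algebra_simps)
    then show ?case using gT[of "u + real n * T"] Suc.IH by metis
  qed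
  have fn: "f (u + real n * T) = f u + real n * g u" for u n
  proof (induction n)
    case 0 then show ?case by simp
  next
    case (Suc n)
    have "f (u + real (Suc n) * T) = f (u + real n * T) + g (u + real n * T)"
      unfolding g_def by (simp add: algebra_simps)
    then show ?case using Suc gn[of u n] by (simp add: algebra_simps)
  qed
  obtain M where M: "\<And>x. \<bar>f x\<bar> \<le> M"
    using assms(2) unfolding bounded_iff by auto
  have "g t = 0" for t
  proof (rule ccontr)
    assume ne: "g t \<noteq> 0"
    obtain n where n: "2 * M / \<bar>g t\<bar> < real n" using reals_Archimedean2 by blast
    have "real n * \<bar>g t\<bar> \<le> 2 * M"
    proof -
      have "real n * g t = f (t + real n * T) - f t" using fn[of t n] by simp
      then have "\<bar>real n * g t\<bar> \<le> \<bar>f (t + real n * T)\<bar> + \<bar>f t\<bar>" by simp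
      also have "\<dots> \<le> 2 * M" using M[of t] M[of "t + real n * T"] by simp
      finally show ?thesis by (simp add: abs_mult)
    qed
    moreover have "2 * M < real n * \<bar>g t\<bar>" using n ne by (simp add: divide_less_eq)
    ultimately show False by simp
  qed
  then show ?thesis unfolding g_def by simp
qed

end
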